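(* There exists a temporal clique $G$ on $n$ vertices such that every temporal $2$-spanner of $G$ has size $\Omega(n^2)$.
   Context: A temporal graph is an undirected graph $G=(V,E)$ with a labeling $\lambda: E\to\mathbb{N}^+$; a temporal clique is one whose underlying graph is complete. A temporal path is a path whose traversed edges have non-decreasing labels in the order of traversal; its length is its number of edges, and $d_G(u,v)$ is the minimum length of a temporal path from $u$ to $v$ in $G$ ($+\infty$ if none). A temporal $\alpha$-spanner of $G$ is a subgraph $H$ with $V(H)=V$, $E(H)\subseteq E$ (same labels), such that $d_H(u,v)\le\alpha\, d_G(u,v)$ for all $u,v\in V$. The size of $H$ is its number of edges. *)

theory Defs
  imports Main "HOL-Library.Extended_Nat"
begin

definition temporal_graph :: "'a set \<Rightarrow> 'a set set \<Rightarrow> ('a set \<Rightarrow> nat) \<Rightarrow> bool" where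
  "temporal_graph V E lam \<longleftrightarrow>
     (\<forall>e\<in>E. \<exists>u v. e = {u, v} \<and> u \<noteq> v \<and> u \<in> V \<and> v \<in> V) \<and> (\<forall>e\<in>E. lam e > 0)"

definition temporal_clique :: "'a set \<Rightarrow> 'a set set \<Rightarrow> ('a set \<Rightarrow> nat) \<Rightarrow> bool" where
  "temporal_clique V E lam \<longleftrightarrow> temporal_graph V E lam \<and>
     E = {e. \<exists>u v. e = {u, v} \<and> u \<noteq> v \<and> u \<in> V \<and> v \<in> V}"

definition temporal_path :: "'a set set \<Rightarrow> ('a set \<Rightarrow> nat) \<Rightarrow> 'a list \<Rightarrow> bool" where
  "temporal_path E lam vs \<longleftrightarrow> vs \<noteq> [] \<and> distinct vs \<and>
     (\<forall>i. Suc i < length vs \<longrightarrow> {vs ! i, vs ! Suc i} \<in> E) \<and>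
     (\<forall>i. Suc (Suc i) < length vs \<longrightarrow>
         lam {vs ! i, vs ! Suc i} \<le> lam {vs ! Suc i, vs ! Suc (Suc i)})"

text \<open>Temporal distance: minimal length (number of edges) of a temporal path from u to v;
  infinity if there is none.\<close>

definition temporal_dist :: "'a set set \<Rightarrow> ('a set \<Rightarrow> nat) \<Rightarrow> 'a \<Rightarrow> 'a \<Rightarrow> enat" where
  "temporal_dist E lam u v =
     Inf {enat (length vs - 1) | vs. temporal_path E lam vs \<and> hd vs = u \<and> last vs = v}"

definition temporal_spanner :: "'a set \<Rightarrow> 'a set set \<Rightarrow> ('a set \<Rightarrow> nat) \<Rightarrow> nat \<Rightarrow> 'a set set \<Rightarrow> bool" where
  "temporal_spanner V E lam \<alpha> H \<longleftrightarrow> H \<subseteq> E \<and>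
     (\<forall>u\<in>V. \<forall>v\<in>V. temporal_dist H lam u v \<le> enat \<alpha> * temporal_dist E lam u v)"

end

theory Submission
  imports Defs
begin

definition lamk :: "nat \<Rightarrow> nat set \<Rightarrow> nat" where
  "lamk k e = (if \<forall>x\<in>e. x < k then 3 else if \<forall>x\<in>e. k \<le> x then 1 else 2)"

definition Ecl :: "nat set \<Rightarrow> nat set set" where
  "Ecl V = {e. \<exists>u v. e = {u, v} \<and> u \<noteq> v \<and> u \<in> V \<and> v \<in> V}"

lemma clique: "temporal_clique V (Ecl V) (lamk k)"
  unfolding temporal_clique_def temporal_graph_def Ecl_def lamk_def by auto

lemma Inf_enat_in: "(S::enat set) \<noteq> {} \<Longrightarrow> Inf S \<in> S"
  unfolding Inf_enat_def by (auto intro: LeastI)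

lemma key:
  assumes sp: "temporal_spanner {..<n} (Ecl {..<n}) (lamk k) 2 H"
    and a: "a < k" and b: "k \<le> b" "b < n"
  shows "{a, b} \<in> H"
proof -
  let ?E = "Ecl {..<n}"
  have HE: "H \<subseteq> ?E" and d: "temporal_dist H (lamk k) a b \<le> enat 2 * temporal_dist ?E (lamk k) a b"
    using sp a b unfolding temporal_spanner_def by auto
  have p1: "temporal_path ?E (lamk k) [a, b]"
    unfolding temporal_path_def Ecl_def using a b
  proof (auto simp: nth_Cons split: nat.splits)
    show "\<exists>u v. {a, b} = {u, v} \<and> u \<noteq> v \<and> u < n \<and> v < n"
      using a b by (intro exI[of _ a] exI[of _ b]) auto
  qed
  have "temporal_dist ?E (lamk k) a b \<le> enat 1"
    unfolding temporal_dist_def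
    by (rule Inf_lower) (use p1 in force)
  hence "enat 2 * temporal_dist ?E (lamk k) a b \<le> enat 2"
    by (metis mult_left_mono numeral_One one_enat_def mult.right_neutral zero_le)
  with d have d2: "temporal_dist H (lamk k) a b \<le> enat 2" by (rule order.trans)
  define S where "S = {enat (length vs - 1) | vs. temporal_path H (lamk k) vs \<and> hd vs = a \<and> last vs = b}"
  have "S \<noteq> {}"
  proof
    assume "S = {}"
    hence "temporal_dist H (lamk k) a b = \<infinity>" unfolding temporal_dist_def S_def[symmetric]
      by (simp add: Inf_enat_def)
    with d2 show False by simp
  qed
  hence "Inf S \<in> S" by (rule Inf_enat_in)
  then obtain vs where vs: "temporal_path H (lamk k) vs" "hd vs = a" "last vs = b"
    and eq: "Inf S = enat (length vs - 1)"
    unfolding S_def by blast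
  have "temporal_dist H (lamk k) a b = Inf S" unfolding temporal_dist_def S_def by simp
  hence len: "enat (length vs - 1) \<le> enat 2" using d2 eq by simp
  have ne: "vs \<noteq> []" using vs(1) unfolding temporal_path_def by auto
  have l3: "length vs \<le> 3" using len ne by (cases vs) auto
  have dist: "distinct vs" using vs(1) unfolding temporal_path_def by auto
  have edges: "\<And>i. Suc i < length vs \<Longrightarrow> {vs ! i, vs ! Suc i} \<in> H"
    and mono: "\<And>i. Suc (Suc i) < length vs \<Longrightarrow>
         lamk k {vs ! i, vs ! Suc i} \<le> lamk k {vs ! Suc i, vs ! Suc (Suc i)}"
    using vs(1) unfolding temporal_path_def by auto
  have "length vs \<noteq> 0" using ne by simp
  hence "length vs = 1 \<or> length vs = 2 \<or> length vs = 3" using l3 by linarith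
  moreover have "length vs \<noteq> 1"
  proof
    assume "length vs = 1"
    then obtain x where "vs = [x]" by (cases vs) auto
    with vs a b show False by auto
  qed
  moreover have "length vs \<noteq> 3"
  proof
    assume "length vs = 3"
    then obtain x y z where vz: "vs = [x, y, z]"
      by (cases vs; cases "tl vs"; cases "tl (tl vs)") auto
    hence xa: "x = a" and zb: "z = b" using vs by auto
    have m: "lamk k {a, y} \<le> lamk k {y, b}" using mono[of 0] vz xa zb by simp
    have "y \<noteq> a" "y \<noteq> b" using dist vz xa zb by auto
    show False
    proof (cases "y < k")
      case True
      then show ?thesis using m a b unfolding lamk_def by auto
    next
      case False
      then show ?thesis using m a b \<open>y \<noteq> b\<close> unfolding lamk_def by auto
    qed
  qed
  ultimately have "length vs = 2" by blast
  then obtain x z where vz: "vs = [x, z]"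
    by (cases vs; cases "tl vs") auto
  hence "x = a" "z = b" using vs by auto
  thus ?thesis using edges[of 0] vz by simp
qed

lemma arith8: "(n::nat) \<ge> 2 \<Longrightarrow> n^2 \<le> 8 * ((n div 2) * (n - n div 2))"
proof -
  assume "n \<ge> 2"
  obtain k where "n = 2*k \<or> n = 2*k+1" by (metis odd_two_times_div_two_succ dvd_mult_div_cancel even_iff_mod_2_eq_zero mod2_eq_if)
  then show ?thesis
  proof
    assume "n = 2*k" thus ?thesis by (simp add: power2_eq_square)
  next
    assume h: "n = 2*k+1"
    with \<open>n \<ge> 2\<close> have "k \<ge> 1" by simp
    have "n div 2 = k" "n - n div 2 = k + 1" using h by auto
    thus ?thesis using h \<open>k \<ge> 1\<close> by (simp add: power2_eq_square algebra_simps)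
  qed
qed

theorem theorem6:
  "\<exists>c::real. c > 0 \<and> (\<exists>N::nat. \<forall>n\<ge>N. \<exists>(V::nat set) E lam.
      card V = n \<and> finite V \<and> temporal_clique V E lam \<and>
      (\<forall>H. temporal_spanner V E lam 2 H \<longrightarrow> real (card H) \<ge> c * real n ^ 2))"
proof (rule exI[of _ "1/8"], rule conjI, simp, rule exI[of _ 2], intro allI impI)
  fix n :: nat assume n2: "2 \<le> n"
  let ?k = "n div 2"
  show "\<exists>(V::nat set) E lam.
      card V = n \<and> finite V \<and> temporal_clique V E lam \<and>
      (\<forall>H. temporal_spanner V E lam 2 H \<longrightarrow> real (card H) \<ge> 1/8 * real n ^ 2)"
  proof (rule exI[of _ "{..<n}"], rule exI[of _ "Ecl {..<n}"], rule exI[of _ "lamk ?k"], intro conjI allI impI)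
    show "card {..<n} = n" by simp
    show "finite {..<n}" by simp
    show "temporal_clique {..<n} (Ecl {..<n}) (lamk ?k)" by (rule clique)
    fix H assume sp: "temporal_spanner {..<n} (Ecl {..<n}) (lamk ?k) 2 H"
    have HE: "H \<subseteq> Ecl {..<n}" using sp unfolding temporal_spanner_def by auto
    have "Ecl {..<n} \<subseteq> Pow {..<n}" unfolding Ecl_def by auto
    hence finH: "finite H" using HE by (meson finite_Pow_iff finite_lessThan finite_subset)
    have inj: "inj_on (\<lambda>(a, b). {a, b}) ({..<?k} \<times> {?k..<n})"
      by (auto simp: inj_on_def doubleton_eq_iff)
    have sub: "(\<lambda>(a, b). {a, b}) ` ({..<?k} \<times> {?k..<n}) \<subseteq> H"
      using key[OF sp] by auto
    have "card ({..<?k} \<times> {?k..<n}) \<le> card H"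
      using card_inj_on_le[OF inj sub finH] .
    hence c: "?k * (n - ?k) \<le> card H" by (simp add: card_cartesian_product)
    have "real (n^2) \<le> 8 * real (?k * (n - ?k))"
      using arith8[OF n2] by (metis of_nat_le_iff of_nat_mult of_nat_numeral)
    with c show "1/8 * real n ^ 2 \<le> real (card H)"
    proof -
      have "real (?k * (n - ?k)) \<le> real (card H)" using c by linarith
      moreover have "real n ^ 2 = real (n^2)" by simp
      ultimately show ?thesis using \<open>real (n^2) \<le> 8 * real (?k * (n - ?k))\<close> by linarith
    qed
  qed
qed

end
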